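(* Let $T\ge 1$ and $d$ be integers with $d>2T+1$, and let $n=T+1$. For every deterministic algorithm that interacts for $T$ rounds with a one-sided oracle and then outputs a vector $\mathbf{w}_{T+1}\in\mathbb{R}^d$, there exists a matrix $A\in\mathbb{R}^{(T+1)\times d}$ such that \[ \max_{l\in[T+1]}\|A_l\|_2=1\qquad\text{and}\qquad \max_{\mathbf{w}\in\mathbb{R}^d:\|\mathbf{w}\|_2\le 1}\ \min_{\mathbf{p}\in\Delta^{n-1}}\mathbf{p}^\top A\mathbf{w}\ \ge\ \frac{1}{\sqrt{T+1}}, \] yet the output of the algorithm after $T$ rounds of interaction with $\mathcal{O}_1^A$ satisfies $\min_{\mathbf{p}\in\Delta^{n-1}}\mathbf{p}^\top A\mathbf{w}_{T+1}\le 0$.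
   Context: $\Delta^{n-1}=\{\mathbf{p}\in\mathbb{R}^n:\ p_i\ge 0\ \forall i,\ \sum_i p_i=1\}$ is the probability simplex; $A_l$ denotes the $l$-th row of $A$; $[n]=\{1,\dots,n\}$. The one-sided oracle $\mathcal{O}_1^A$: given a query $(l,\mathbf{w})\in[n]\times\mathbb{R}^d$, it returns $A\mathbf{w}$ and the row $A_l$. A deterministic algorithm interacting with the oracle for $T$ rounds chooses, at each round $t=1,\dots,T$, a query $(l_t,\mathbf{w}_t)$ as a deterministic function of the oracle responses received in rounds $1,\dots,t-1$, and after round $T$ outputs $\mathbf{w}_{T+1}\in\mathbb{R}^d$ as a deterministic function of all $T$ responses. Queries are not restricted to the unit ball. *)

theory Defs
  imports "HOL-Analysis.Analysis"
begin

text \<open>Matrices A in R^{n x d} are rendered as real^'d^'n (rows indexed by 'n, A$l is row l).\<close>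

definition prob_simplex :: "(real^'n::finite) set" where
  "prob_simplex = {p. (\<forall>i. p $ i \<ge> 0) \<and> (\<Sum>i\<in>UNIV. p $ i) = 1}"

definition margin :: "real^'d^'n \<Rightarrow> real^'d \<Rightarrow> real" where
  "margin A w = (INF p\<in>prob_simplex. p \<bullet> (A *v w))"

definition oracle1 :: "real^'d^'n \<Rightarrow> ('n \<times> (real^'d)) \<Rightarrow> (real^'n) \<times> (real^'d)" where
  "oracle1 A q = (A *v snd q, A $ fst q)"

fun transcript :: "(((real^'n) \<times> (real^'d)) list \<Rightarrow> ('n \<times> (real^'d))) \<Rightarrow> real^'d^'n \<Rightarrow> nat
    \<Rightarrow> ((real^'n) \<times> (real^'d)) list" where
  "transcript query A 0 = []"
| "transcript query A (Suc t) =
     transcript query A t @ [oracle1 A (query (transcript query A t))]"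

end

theory Submission
  imports Defs
begin

definition pick :: "(real^'d) set \<Rightarrow> real^'d" where
  "pick S = (SOME u. norm u = 1 \<and> (\<forall>s\<in>S. u \<bullet> s = 0))"

lemma pick:
  fixes S :: "(real^'d) set"
  assumes "finite S" "card S < CARD('d)"
  shows "norm (pick S) = 1 \<and> (\<forall>s\<in>S. pick S \<bullet> s = 0)"
proof -
  have "dim S < DIM(real^'d)" using dim_le_card'[OF assms(1)] assms(2) by simp
  then obtain x :: "real^'d" where x: "x \<noteq> 0" "\<And>y. y \<in> span S \<Longrightarrow> orthogonal x y"
    using orthogonal_to_subspace_exists by blast
  define u where "u = (1 / norm x) *\<^sub>R x"
  have "norm u = 1 \<and> (\<forall>s\<in>S. u \<bullet> s = 0)"
    using x span_base[of _ S] by (auto simp: u_def orthogonal_def)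
  then show ?thesis unfolding pick_def by (rule someI)
qed

definition upd :: "(real^'d) set \<Rightarrow> real^'d^'n \<Rightarrow> 'n \<Rightarrow> real^'d^'n" where
  "upd X B l = (if B$l = 0 then (\<chi> k. if k = l then pick (X \<union> (\<lambda>k. B$k)`(-{l})) else B$k) else B)"

definition good :: "(real^'d) set \<Rightarrow> 'n itself \<Rightarrow> bool" where
  "good X _ \<longleftrightarrow> finite X \<and> card X + CARD('n) \<le> CARD('d)"

lemma upd_other: "k \<noteq> l \<Longrightarrow> upd X B l $ k = B $ k"
  by (simp add: upd_def)

lemma upd_nz: "B $ l \<noteq> 0 \<Longrightarrow> upd X B l = B"
  by (simp add: upd_def)

lemma upd_new:
  fixes B :: "real^'d^'n"
  assumes g: "good X TYPE('n)" and z: "B $ l = 0"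
  shows "norm (upd X B l $ l) = 1 \<and> (\<forall>x\<in>X. upd X B l $ l \<bullet> x = 0)
       \<and> (\<forall>k. k \<noteq> l \<longrightarrow> upd X B l $ l \<bullet> B $ k = 0)"
proof -
  let ?S = "X \<union> (\<lambda>k. B$k)`(-{l})"
  have fin: "finite X" and c: "card X + CARD('n) \<le> CARD('d)" using g by (auto simp: good_def)
  have "card ((\<lambda>k. B$k)`(-{l})) \<le> card (-{l} :: 'n set)" by (rule card_image_le) simp
  also have "\<dots> = CARD('n) - 1" by (simp add: Compl_eq_Diff_UNIV card_Diff_singleton)
  finally have "card ?S \<le> card X + (CARD('n) - 1)"
    using card_Un_le[of X "(\<lambda>k. B$k)`(-{l})"] by linarith
  moreover have "CARD('n) \<ge> 1" by (simp add: Suc_leI)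
  ultimately have "card ?S < CARD('d)" using c by linarith
  then have p: "norm (pick ?S) = 1 \<and> (\<forall>s\<in>?S. pick ?S \<bullet> s = 0)"
    using pick[of ?S] fin by simp
  have e: "upd X B l $ l = pick ?S" using z by (simp add: upd_def)
  show ?thesis using p unfolding e by auto
qed

definition Ext :: "(real^'d) set \<Rightarrow> real^'d^'n \<Rightarrow> real^'d^'n \<Rightarrow> bool" where
  "Ext X B A \<longleftrightarrow> (\<forall>k. B$k \<noteq> 0 \<longrightarrow> A$k = B$k) \<and> (\<forall>k. B$k = 0 \<longrightarrow> (\<forall>x\<in>X. A$k \<bullet> x = 0))"

lemma Ext_refl: "Ext X B B" by (simp add: Ext_def)

lemma Ext_trans: "Ext X B C \<Longrightarrow> Ext X C A \<Longrightarrow> Ext X B A"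
  unfolding Ext_def by metis

lemma Ext_mono: "X \<subseteq> Y \<Longrightarrow> Ext Y B A \<Longrightarrow> Ext X B A"
  unfolding Ext_def by blast

lemma Ext_upd:
  assumes "good Y TYPE('n)" "X \<subseteq> Y"
  shows "Ext X (B :: real^'d^'n) (upd Y B l)"
  unfolding Ext_def
proof (intro conjI allI impI ballI)
  fix k assume "B $ k \<noteq> 0" then show "upd Y B l $ k = B $ k"
    by (cases "k = l") (simp_all add: upd_nz upd_other)
next
  fix k x assume "B $ k = 0" "x \<in> X"
  then show "upd Y B l $ k \<bullet> x = 0"
    using upd_new[OF assms(1), of B l] assms(2)
    by (cases "k = l") (auto simp: upd_other)
qed

lemma Ext_mult: "Ext X B A \<Longrightarrow> w \<in> X \<Longrightarrow> A *v w = B *v w"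
proof -
  assume e: "Ext X B A" and w: "w \<in> X"
  have "A $ k \<bullet> w = B $ k \<bullet> w" for k
    using e w unfolding Ext_def by (cases "B $ k = 0") auto
  then show ?thesis by (simp add: vec_eq_iff matrix_vector_mul_component)
qed

definition OZ :: "real^'d^'n \<Rightarrow> bool" where
  "OZ B \<longleftrightarrow> (\<forall>k. B$k \<noteq> 0 \<longrightarrow> norm (B$k) = 1) \<and> (\<forall>k j. k \<noteq> j \<longrightarrow> B$k \<bullet> B$j = 0)"

lemma OZ_upd:
  assumes g: "good X TYPE('n)" and o: "OZ (B :: real^'d^'n)"
  shows "OZ (upd X B l)"
proof (cases "B $ l = 0")
  case False then show ?thesis using o by (simp add: upd_nz)
next
  case True
  note n = upd_new[OF g True]
  show ?thesis unfolding OZ_def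
  proof (intro conjI allI impI)
    fix k assume "upd X B l $ k \<noteq> 0" then show "norm (upd X B l $ k) = 1"
      using n o by (cases "k = l") (auto simp: upd_other OZ_def)
  next
    fix k j :: 'n assume kj: "k \<noteq> j"
    show "upd X B l $ k \<bullet> upd X B l $ j = 0"
    proof (cases "k = l")
      case True then show ?thesis using n kj by (simp add: upd_other)
    next
      case False
      then show ?thesis using n kj o
        by (cases "j = l") (auto simp: upd_other OZ_def inner_commute)
    qed
  qed
qed

lemma upd_row: "good X TYPE('n) \<Longrightarrow> upd X (B :: real^'d^'n) l $ l \<noteq> 0"
  using upd_new[of X B l] by (cases "B $ l = 0") (auto simp: upd_nz)

lemma upd_nzset: "{k. upd X B l $ k \<noteq> 0} \<subseteq> insert l {k. B $ k \<noteq> 0}"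
  by (auto simp: upd_other)

fun sim :: "(((real^'n) \<times> (real^'d)) list \<Rightarrow> ('n \<times> (real^'d))) \<Rightarrow> nat
   \<Rightarrow> ((real^'n) \<times> (real^'d)) list \<times> (real^'d^'n) \<times> (real^'d) list" where
  "sim query 0 = ([], 0, [])"
| "sim query (Suc t) = (let h = fst (sim query t); B = fst (snd (sim query t)); W = snd (snd (sim query t));
      q = query h; W' = W @ [snd q]; B' = upd (set W') B (fst q) in (h @ [oracle1 B' q], B', W'))"

definition "hs query t = fst (sim query t)"
definition "Bs query t = fst (snd (sim query t))"
definition "Ws query t = snd (snd (sim query t))"

lemma sim_0: "hs query 0 = []" "Bs query 0 = 0" "Ws query 0 = []"
  by (simp_all add: hs_def Bs_def Ws_def)

lemma sim_Suc:
  "Ws query (Suc t) = Ws query t @ [snd (query (hs query t))]"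
  "Bs query (Suc t) = upd (set (Ws query (Suc t))) (Bs query t) (fst (query (hs query t)))"
  "hs query (Suc t) = hs query t @ [oracle1 (Bs query (Suc t)) (query (hs query t))]"
  by (simp_all add: hs_def Bs_def Ws_def Let_def)

lemma sim_len: "length (Ws query t) = t"
  by (induction t) (simp_all add: sim_0 sim_Suc)

lemma good_sim:
  fixes query :: "((real^'n) \<times> (real^'d)) list \<Rightarrow> ('n \<times> (real^'d))"
  assumes "CARD('n) = T + 1" "CARD('d) > 2 * T + 1" "t \<le> T"
  shows "good (set (Ws query t)) TYPE('n)"
  using card_length[of "Ws query t"] assms by (simp add: good_def sim_len)

lemma sim_props:
  fixes query :: "((real^'n) \<times> (real^'d)) list \<Rightarrow> ('n \<times> (real^'d))"
  assumes "CARD('n) = T + 1" "CARD('d) > 2 * T + 1"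
  shows "t \<le> T \<Longrightarrow> OZ (Bs query t) \<and> card {k. Bs query t $ k \<noteq> 0} \<le> t
     \<and> (\<forall>s\<le>t. Ext (set (Ws query s)) (Bs query s) (Bs query t))"
proof (induction t)
  case 0 then show ?case by (simp add: sim_0 OZ_def Ext_refl)
next
  case (Suc t)
  then have IH: "OZ (Bs query t)" "card {k. Bs query t $ k \<noteq> 0} \<le> t"
     "\<forall>s\<le>t. Ext (set (Ws query s)) (Bs query s) (Bs query t)" by auto
  have g: "good (set (Ws query (Suc t))) TYPE('n)" using good_sim[OF assms Suc.prems] .
  have o: "OZ (Bs query (Suc t))" using OZ_upd[OF g IH(1)] by (simp add: sim_Suc(2)[of query t])
  have "{k. Bs query (Suc t) $ k \<noteq> 0} \<subseteq> insert (fst (query (hs query t))) {k. Bs query t $ k \<noteq> 0}"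
    unfolding sim_Suc(2)[of query t] by (rule upd_nzset)
  then have "card {k. Bs query (Suc t) $ k \<noteq> 0} \<le> card (insert (fst (query (hs query t))) {k. Bs query t $ k \<noteq> 0})"
    by (intro card_mono) auto
  also have "\<dots> \<le> Suc t" using IH(2) card_insert_le_m1
    by (metis (no_types, lifting) Suc_le_mono card.insert_remove card_Diff1_le finite dual_order.trans)
  finally have c: "card {k. Bs query (Suc t) $ k \<noteq> 0} \<le> Suc t" .
  have e: "\<forall>s\<le>Suc t. Ext (set (Ws query s)) (Bs query s) (Bs query (Suc t))"
  proof (intro allI impI)
    fix s assume s: "s \<le> Suc t"
    show "Ext (set (Ws query s)) (Bs query s) (Bs query (Suc t))"
    proof (cases "s = Suc t")
      case True then show ?thesis by (simp add: Ext_refl)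
    next
      case False
      then have st: "s \<le> t" using s by simp
      have sub: "set (Ws query s) \<subseteq> set (Ws query (Suc t))"
      proof -
        have "set (Ws query s) \<subseteq> set (Ws query (s + m))" for m
          by (induction m) (auto simp: sim_Suc)
        from this[of "Suc t - s"] st show ?thesis by simp
      qed
      have "Ext (set (Ws query s)) (Bs query t) (Bs query (Suc t))"
        unfolding sim_Suc(2)[of query t] by (rule Ext_upd[OF g sub])
      then show ?thesis using IH(3) st Ext_trans by blast
    qed
  qed
  show ?case using o c e by blast
qed

lemma fill:
  assumes "good X TYPE('n)"
  shows "OZ (B :: real^'d^'n) \<Longrightarrow> OZ (foldl (upd X) B xs) \<and> Ext X B (foldl (upd X) B xs)
     \<and> (\<forall>k\<in>set xs. foldl (upd X) B xs $ k \<noteq> 0)"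
proof (induction xs arbitrary: B)
  case Nil then show ?case by (simp add: Ext_refl)
next
  case (Cons a ys)
  let ?B = "upd X B a"
  have o: "OZ ?B" using OZ_upd[OF assms Cons.prems] .
  have IH: "OZ (foldl (upd X) ?B ys)" "Ext X ?B (foldl (upd X) ?B ys)"
    "\<forall>k\<in>set ys. foldl (upd X) ?B ys $ k \<noteq> 0" using Cons.IH[OF o] by auto
  have "?B $ a \<noteq> 0" using upd_row[OF assms] .
  then have "foldl (upd X) ?B ys $ a \<noteq> 0" using IH(2) unfolding Ext_def by metis
  moreover have "Ext X B (foldl (upd X) ?B ys)"
    using Ext_trans[OF Ext_upd[OF assms order_refl] IH(2)] .
  ultimately show ?case using IH by simp
qed

lemma simplex_axis: "axis l 1 \<in> prob_simplex"
  by (simp add: prob_simplex_def axis_def)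

lemma margin_le: "margin (A :: real^'d^'n) w \<le> (A *v w) $ l"
proof -
  have bdd: "bdd_below ((\<lambda>p. p \<bullet> (A *v w)) ` prob_simplex)"
  proof (rule bdd_belowI2)
    fix p :: "real^'n" assume p: "p \<in> prob_simplex"
    have "norm p \<le> (\<Sum>i\<in>UNIV. \<bar>p $ i\<bar>)" by (rule norm_le_l1_cart)
    also have "\<dots> = 1" using p by (simp add: prob_simplex_def)
    finally have "norm p \<le> 1" .
    have "\<bar>p \<bullet> (A *v w)\<bar> \<le> norm p * norm (A *v w)" by (rule Cauchy_Schwarz_ineq2)
    also have "\<dots> \<le> norm (A *v w)" using \<open>norm p \<le> 1\<close> by (simp add: mult_left_le_one_le)
    finally show "- norm (A *v w) \<le> p \<bullet> (A *v w)" by linarith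
  qed
  have "margin A w \<le> axis l 1 \<bullet> (A *v w)"
    unfolding margin_def by (rule cINF_lower[OF bdd simplex_axis])
  then show ?thesis by (simp add: inner_axis')
qed

lemma margin_ge:
  fixes A :: "real^'d^'n"
  assumes "\<And>l. c \<le> (A *v w) $ l"
  shows "c \<le> margin A w"
  unfolding margin_def
proof (rule cINF_greatest)
  show "prob_simplex \<noteq> {}" using simplex_axis by blast
next
  fix p :: "real^'n" assume p: "p \<in> prob_simplex"
  have "c = (\<Sum>i\<in>UNIV. p $ i * c)" using p by (simp add: prob_simplex_def sum_distrib_right[symmetric])
  also have "\<dots> \<le> (\<Sum>i\<in>UNIV. p $ i * (A *v w) $ i)"
    using p assms by (intro sum_mono mult_left_mono) (auto simp: prob_simplex_def)
  also have "\<dots> = p \<bullet> (A *v w)" by (simp add: inner_vec_def)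
  finally show "c \<le> p \<bullet> (A *v w)" .
qed

lemma Ws_mono: "s \<le> t \<Longrightarrow> set (Ws query s) \<subseteq> set (Ws query t)"
proof -
  assume st: "s \<le> t"
  have "set (Ws query s) \<subseteq> set (Ws query (s + m))" for m
    by (induction m) (auto simp: sim_Suc)
  from this[of "t - s"] st show ?thesis by simp
qed

theorem theorem1:
  fixes T :: nat
    and query :: "((real^'n) \<times> (real^'d)) list \<Rightarrow> ('n \<times> (real^'d))"
    and out :: "((real^'n) \<times> (real^'d)) list \<Rightarrow> real^'d"
  assumes "T \<ge> 1"
    and cn: "CARD('n) = T + 1"
    and cd: "CARD('d) > 2 * T + 1"
  shows "\<exists>A :: real^'d^'n.
           Max (range (\<lambda>l. norm (A $ l))) = 1
         \<and> (SUP w\<in>cball 0 1. margin A w) \<ge> 1 / sqrt (real T + 1)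
         \<and> margin A (out (transcript query A T)) \<le> 0"
proof -
  obtain xs :: "'n list" where xs: "set xs = UNIV" using finite_list[of "UNIV :: 'n set"] by auto
  define X where "X = set (Ws query T) \<union> {out (hs query T)}"
  have "card X \<le> card (set (Ws query T)) + 1" unfolding X_def
    using card_Un_le[of "set (Ws query T)" "{out (hs query T)}"] by simp
  also have "\<dots> \<le> T + 1" using card_length[of "Ws query T"] by (simp add: sim_len)
  finally have gX: "good X TYPE('n)" using cn cd by (simp add: good_def X_def)
  define A where "A = foldl (upd X) (Bs query T) xs"
  have SP: "OZ (Bs query T)" "card {k. Bs query T $ k \<noteq> 0} \<le> T"
     "\<forall>s\<le>T. Ext (set (Ws query s)) (Bs query s) (Bs query T)"
    using sim_props[OF cn cd order_refl, of query] by auto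
  have F: "OZ A" "Ext X (Bs query T) A" "\<And>k. A $ k \<noteq> 0"
    using fill[OF gX SP(1), of xs] xs by (auto simp: A_def)
  have tr: "t \<le> T \<Longrightarrow> transcript query A t = hs query t" for t
  proof (induction t)
    case 0 then show ?case by (simp add: sim_0)
  next
    case (Suc t)
    let ?q = "query (hs query t)"
    have g: "good (set (Ws query (Suc t))) TYPE('n)" using good_sim[OF cn cd Suc.prems] .
    have sub: "set (Ws query (Suc t)) \<subseteq> X" using Ws_mono[OF Suc.prems, of query] by (auto simp: X_def)
    have E: "Ext (set (Ws query (Suc t))) (Bs query (Suc t)) A"
      using Ext_trans[OF SP(3)[rule_format, OF Suc.prems] Ext_mono[OF sub F(2)]] .
    have w: "snd ?q \<in> set (Ws query (Suc t))" by (simp add: sim_Suc)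
    have r: "Bs query (Suc t) $ fst ?q \<noteq> 0"
      unfolding sim_Suc(2)[of query t] using upd_row[OF g[unfolded sim_Suc(1)[of query t]]]
      by (simp add: sim_Suc(1))
    have o1: "A *v snd ?q = Bs query (Suc t) *v snd ?q" by (rule Ext_mult[OF E w])
    have o2: "A $ fst ?q = Bs query (Suc t) $ fst ?q" using E r unfolding Ext_def by blast
    have "oracle1 A ?q = oracle1 (Bs query (Suc t)) ?q"
      unfolding oracle1_def o1 o2 ..
    moreover have "transcript query A t = hs query t" using Suc by simp
    ultimately show ?case by (simp only: transcript.simps sim_Suc(3))
  qed
  obtain l where l: "Bs query T $ l = 0"
  proof (rule ccontr)
    assume "\<not> thesis"
    then have "{k. Bs query T $ k \<noteq> 0} = UNIV" using that by blast
    then show False using SP(2) cn by simp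
  qed
  have "A $ l \<bullet> out (hs query T) = 0" using F(2) l unfolding Ext_def X_def by blast
  then have m0: "margin A (out (transcript query A T)) \<le> 0"
    using margin_le[of A "out (hs query T)" l] tr[OF order_refl]
    by (simp add: matrix_vector_mul_component)
  have n1: "\<And>k. norm (A $ k) = 1" using F(1,3) by (simp add: OZ_def)
  have orth: "\<And>k j. k \<noteq> j \<Longrightarrow> A $ k \<bullet> A $ j = 0" using F(1) by (simp add: OZ_def)
  have rng: "range (\<lambda>l. norm (A $ l)) = {1}" using n1 by auto
  define c where "c = 1 / sqrt (real T + 1)"
  define w0 where "w0 = c *\<^sub>R (\<Sum>k\<in>UNIV. A $ k)"
  have self: "A $ i \<bullet> A $ i = 1" for i using n1[of i] by (simp add: norm_eq_sqrt_inner)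
  have comp: "(A *v w0) $ i = c" for i
  proof -
    have "(\<Sum>k\<in>UNIV. A $ i \<bullet> A $ k) = (\<Sum>k\<in>UNIV. if k = i then 1 else 0)"
      by (rule sum.cong) (auto simp: self orth)
    then show ?thesis by (simp add: matrix_vector_mul_component w0_def inner_sum_right)
  qed
  have "(norm (\<Sum>k\<in>UNIV. A $ k))\<^sup>2 = (\<Sum>k\<in>UNIV. (norm (A $ k))\<^sup>2)"
    by (rule norm_sum_Pythagorean) (auto simp: pairwise_def orthogonal_def orth)
  also have "\<dots> = real T + 1" using n1 cn by simp
  finally have "norm (\<Sum>k\<in>UNIV. A $ k) = sqrt (real T + 1)"
    by (metis norm_ge_zero real_sqrt_unique)
  then have nw: "norm w0 = 1" by (simp add: w0_def c_def)
  have bdd: "bdd_above (margin A ` cball 0 1)"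
  proof (rule bdd_aboveI2)
    fix w :: "real^'d" assume "w \<in> cball 0 1"
    then have "norm w \<le> 1" by simp
    have "margin A w \<le> (A *v w) $ l" by (rule margin_le)
    also have "\<dots> \<le> norm (A $ l) * norm w" unfolding matrix_vector_mul_component
      by (rule norm_cauchy_schwarz)
    also have "\<dots> \<le> 1" using n1[of l] \<open>norm w \<le> 1\<close> by simp
    finally show "margin A w \<le> 1" .
  qed
  have "c \<le> margin A w0" by (rule margin_ge) (simp add: comp)
  then have "c \<le> (SUP w\<in>cball 0 1. margin A w)"
    using cSUP_upper2[OF bdd, of w0 c] nw by simp
  then show ?thesis using m0 rng unfolding c_def by auto
qed

end
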